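(* Let $n, m \in \mathbb{N}$ with $n \ge 1$, let $N_1,\dots,N_n \in \mathbb{N}$, let $k_{i,j} \in \mathbb{R}$ and $q_{i,j} \in \mathbb{R}$ for $i \in [n]$, $j \in [N_i]$, let $f_1,\dots,f_m \in \mathbb{R}[x_1,\dots,x_n]$ and $p_1,\dots,p_m \in \mathbb{R}$, let $M \in \mathbb{R}_+$, and let $\varphi:\mathbb{R}^n_+ \to \mathbb{R}_+$ be a continuous piecewise polynomial payoff function. Let $d$ be the smallest even integer with $d \ge \max_{i\in[n],j\in[N_i],\ell\in[m]}\{\deg(\varphi),\deg(f_{i,j}),\deg(f_\ell)\}+1$, where $f_{i,j}(\mathbf{x}) = \max(0,x_i-k_{i,j})$. Consider the optimization problem \[ \sup_{\mu} \text{ (respectively } \inf_{\mu}\text{)} \int_{\mathbb{R}^n_+}\varphi(\mathbf{x})\,\mathrm{d}\mu(\mathbf{x}) \] over positive finite Borel measures $\mu$ on $\mathbb{R}^n_+$ subject to \[ \int_{\mathbb{R}^n_+}\max(0,x_i-k_{i,j})\,\mathrm{d}\mu(\mathbf{x}) = q_{i,j}\ (i\in[n],\,j\in[N_i]),\quad \int_{\mathbb{R}^n_+} f_\ell\,\mathrm{d}\mu = p_\ell\ (\ell\in[m]), \] \[ \int_{\mathbb{R}^n_+}\mathrm{d}\mu = 1,\qquad \int_{\mathbb{R}^n_+}\|\mathbf{x}\|_2^d\,\mathrm{d}\mu(\mathbf{x}) \le M. \] If this problem is feasible, then its supremum (respectively infimum) is attained by some feasible measure $\mu$.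
   Context: $\mathbb{R}_+=[0,\infty)$, $[N]=\{1,\dots,N\}$, $\|\cdot\|_2$ is the Euclidean norm. For a piecewise polynomial function, $\deg$ denotes the largest degree of its polynomial pieces; $\deg(f_{i,j})=1$. *)

theory Defs
  imports "HOL-Analysis.Analysis"
begin

text \<open>Real polynomials in the variables x_i (i ranging over the finite index type 'n),
  represented by their coefficient function on exponent vectors (finite support).\<close>

definition poly_coeffs :: "(('n::finite \<Rightarrow> nat) \<Rightarrow> real) \<Rightarrow> bool" where
  "poly_coeffs c \<longleftrightarrow> finite {\<alpha>. c \<alpha> \<noteq> 0}"

definition peval :: "(('n::finite \<Rightarrow> nat) \<Rightarrow> real) \<Rightarrow> real^'n \<Rightarrow> real" where
  "peval c x = (\<Sum>\<alpha>\<in>{\<alpha>. c \<alpha> \<noteq> 0}. c \<alpha> * (\<Prod>i\<in>UNIV. (x $ i) ^ \<alpha> i))"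

text \<open>Total degree (degree of the zero polynomial taken to be 0).\<close>
definition pdeg :: "(('n::finite \<Rightarrow> nat) \<Rightarrow> real) \<Rightarrow> nat" where
  "pdeg c = Max (insert 0 {(\<Sum>i\<in>UNIV. \<alpha> i) | \<alpha>. c \<alpha> \<noteq> 0})"

definition nonneg_orthant :: "(real^'n) set" where
  "nonneg_orthant = {x. \<forall>i. 0 \<le> x $ i}"

definition cont_piecewise_poly_on ::
    "(real^'n) set \<Rightarrow> (real^'n \<Rightarrow> real) \<Rightarrow> (nat \<Rightarrow> (('n::finite \<Rightarrow> nat) \<Rightarrow> real)) \<Rightarrow> nat \<Rightarrow> bool" where
  "cont_piecewise_poly_on S phi P r \<longleftrightarrow>
     continuous_on S phi \<and> (\<forall>k<r. poly_coeffs (P k)) \<and> (\<forall>x\<in>S. \<exists>k<r. phi x = peval (P k) x)"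

definition pw_deg :: "(nat \<Rightarrow> (('n::finite \<Rightarrow> nat) \<Rightarrow> real)) \<Rightarrow> nat \<Rightarrow> nat" where
  "pw_deg P r = Max (insert 0 {pdeg (P k) | k. k < r})"

text \<open>Feasible set: positive finite Borel measures on the nonnegative orthant (represented as
  Borel measures on R^n vanishing outside the orthant) satisfying the constraints.\<close>
definition feasible_measures ::
    "('n::finite \<Rightarrow> nat) \<Rightarrow> ('n \<Rightarrow> nat \<Rightarrow> real) \<Rightarrow> ('n \<Rightarrow> nat \<Rightarrow> real)
     \<Rightarrow> nat \<Rightarrow> (nat \<Rightarrow> (('n \<Rightarrow> nat) \<Rightarrow> real)) \<Rightarrow> (nat \<Rightarrow> real) \<Rightarrow> real \<Rightarrow> nat
     \<Rightarrow> (real^'n) measure set" where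
  "feasible_measures N k q m f p M d =
     {\<mu>. sets \<mu> = sets borel \<and> finite_measure \<mu>
        \<and> emeasure \<mu> (UNIV - nonneg_orthant) = 0
        \<and> (\<forall>i. \<forall>j\<in>{1..N i}. integrable \<mu> (\<lambda>x. max 0 (x $ i - k i j))
                \<and> (\<integral>x. max 0 (x $ i - k i j) \<partial>\<mu>) = q i j)
        \<and> (\<forall>l\<in>{1..m}. integrable \<mu> (peval (f l)) \<and> (\<integral>x. peval (f l) x \<partial>\<mu>) = p l)
        \<and> measure \<mu> UNIV = 1
        \<and> (\<integral>\<^sup>+x. ennreal (norm x ^ d) \<partial>\<mu>) \<le> ennreal M}"

end

theory Submission
  imports Defs "HOL-Probability.Probability"
begin

definition gdig :: "real \<Rightarrow> real" where
  "gdig t = min 1 (max 0 (1/2 - 3/2 * cos (pi * t)))"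

lemma continuous_gdig: "continuous_on UNIV gdig"
  unfolding gdig_def by (intro continuous_intros)

lemma gdig_bounds: "0 \<le> gdig t" "gdig t \<le> 1"
  unfolding gdig_def by auto

lemma cos_shift_even: "cos (pi * (2 * of_int j + u)) = cos (pi * u)"
proof -
  have e: "pi * (2 * of_int j + u) = pi * u + (2 * pi) * of_int j" by (simp add: algebra_simps)
  show ?thesis unfolding e cos_add cos_int_2pin sin_int_2pin by simp
qed

lemma gdig_low:
  assumes "0 \<le> u" "u \<le> 1/3"
  shows "gdig (2 * of_int j + u) = 0"
proof -
  have "cos (pi * u) \<ge> cos (pi / 3)"
    using assms by (intro cos_monotone_0_pi_le) auto
  then have "cos (pi * u) \<ge> 1/2" by (simp add: cos_60)
  then show ?thesis unfolding gdig_def cos_shift_even by auto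
qed

lemma gdig_high:
  assumes "2/3 \<le> u" "u \<le> 1"
  shows "gdig (2 * of_int j + u) = 1"
proof -
  have "cos (pi * u) \<le> cos (2 * pi / 3)"
    using assms by (intro cos_monotone_0_pi_le) auto
  also have "cos (2 * pi / 3) = - 1/2" by (rule cos_120)
  finally have "cos (pi * u) \<le> -1/2" .
  then show ?thesis unfolding gdig_def cos_shift_even by auto
qed

lemma summable_tern:
  fixes b :: "nat \<Rightarrow> real"
  assumes b: "\<And>k. b k = 0 \<or> b k = 1"
  shows "summable (\<lambda>k. 2 * b k / 3^(k+c))"
proof (rule summable_comparison_test[where g="\<lambda>k. 2 * (1/3)^k"])
  show "summable (\<lambda>k. 2 * (1/3::real)^k)"
    by (intro summable_mult summable_geometric) auto
  show "\<exists>N. \<forall>n\<ge>N. norm (2 * b n / 3^(n+c)) \<le> 2 * (1/3::real)^n"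
  proof (intro exI allI impI)
    fix n :: nat
    have "(3::real)^n \<le> 3^(n+c)" by (intro power_increasing) auto
    then have "1 / (3::real)^(n+c) \<le> 1 / 3^n" by (intro divide_left_mono) auto
    then show "norm (2 * b n / 3^(n+c)) \<le> 2 * (1/3::real)^n"
      using b[of n] by (auto simp: power_divide)
  qed
qed

lemma tern_tail_bounds:
  fixes b :: "nat \<Rightarrow> real"
  assumes b: "\<And>k. b k = 0 \<or> b k = 1"
  shows "0 \<le> (\<Sum>k. 2 * b k / 3^(k+2))" "(\<Sum>k. 2 * b k / 3^(k+2)) \<le> 1/3"
proof -
  have s: "summable (\<lambda>k. 2 * b k / 3^(k+2))" by (rule summable_tern[OF b])
  show "0 \<le> (\<Sum>k. 2 * b k / 3^(k+2))"
    using b by (intro suminf_nonneg[OF s]) (metis divide_nonneg_pos mult_nonneg_nonneg order.refl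
       zero_le_numeral zero_less_numeral zero_less_power zero_less_one less_imp_le)
  have g: "(\<lambda>k. (2/9) * (1/3::real)^k) sums ((2/9) * (1 / (1 - 1/3)))"
    by (intro sums_mult geometric_sums) auto
  have "(\<Sum>k. 2 * b k / 3^(k+2)) \<le> (\<Sum>k. (2/9) * (1/3::real)^k)"
  proof (rule suminf_le[OF _ s sums_summable[OF g]])
    fix k
    show "2 * b k / 3^(k+2) \<le> (2/9) * (1/3::real)^k"
      using b[of k] by (auto simp: power_add power_divide)
  qed
  also have "\<dots> = 1/3" using sums_unique[OF g] by simp
  finally show "(\<Sum>k. 2 * b k / 3^(k+2)) \<le> 1/3" .
qed

lemma ternary_digit:
  fixes b :: "nat \<Rightarrow> real"
  assumes b: "\<And>k. b k = 0 \<or> b k = 1"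
  shows "gdig (3^K * (\<Sum>k. 2 * b k / 3^(k+1))) = b K"
proof -
  define a where "a k = 3^K * (2 * b k / 3^(k+1))" for k
  have sa: "summable a" unfolding a_def by (intro summable_mult summable_tern[OF b])
  have "3^K * (\<Sum>k. 2 * b k / 3^(k+1)) = (\<Sum>k. a k)"
    unfolding a_def by (intro suminf_mult[symmetric] summable_tern[OF b])
  also have "\<dots> = (\<Sum>n. a (n + Suc K)) + (\<Sum>i<Suc K. a i)"
    by (rule suminf_split_initial_segment[OF sa])
  also have "(\<Sum>n. a (n + Suc K)) = (\<Sum>n. 2 * b (n + Suc K) / 3^(n+2))"
  proof (rule suminf_cong)
    fix n
    have "(3::real)^(n + Suc K + 1) = 3^K * 3^(n+2)" by (simp add: power_add[symmetric])
    then show "a (n + Suc K) = 2 * b (n + Suc K) / 3^(n+2)" unfolding a_def by simp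
  qed
  also have "(\<Sum>i<Suc K. a i) = (\<Sum>i<K. a i) + 2 * b K / 3"
    unfolding a_def by simp
  also define j :: int where "j = (\<Sum>i<K. if b i = 1 then 3^(K - Suc i) else 0)"
  have "(\<Sum>i<K. a i) = 2 * of_int j"
  proof -
    have "(\<Sum>i<K. a i) = (\<Sum>i<K. 2 * (if b i = 1 then 3^(K - Suc i) else 0))"
    proof (rule sum.cong[OF refl])
      fix i assume "i \<in> {..<K}"
      then have "K = (K - Suc i) + (i+1)" by simp
      then have "(3::real)^K = 3^(K - Suc i) * 3^(i+1)" by (metis power_add)
      then show "a i = 2 * (if b i = 1 then 3^(K - Suc i) else 0)"
        unfolding a_def using b[of i] by auto
    qed
    also have "\<dots> = 2 * of_int j" unfolding j_def by (simp add: sum_distrib_left if_distrib cong: if_cong)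
    finally show ?thesis .
  qed
  finally have eq: "3^K * (\<Sum>k. 2 * b k / 3^(k+1)) =
      2 * of_int j + (2 * b K / 3 + (\<Sum>n. 2 * b (n + Suc K) / 3^(n+2)))" by simp
  have bb: "\<And>k. b (k + Suc K) = 0 \<or> b (k + Suc K) = 1" using b by auto
  note t = tern_tail_bounds[of "\<lambda>k. b (k + Suc K)", OF bb]
  show ?thesis
  proof (cases "b K = 0")
    case True
    have "gdig (2 * of_int j + (2 * b K / 3 + (\<Sum>n. 2 * b (n + Suc K) / 3^(n+2)))) = 0"
      using t True by (intro gdig_low) auto
    then show ?thesis unfolding eq using True by simp
  next
    case False
    then have "b K = 1" using b by auto
    have "gdig (2 * of_int j + (2 * b K / 3 + (\<Sum>n. 2 * b (n + Suc K) / 3^(n+2)))) = 1"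
      using t \<open>b K = 1\<close> by (intro gdig_high) auto
    then show ?thesis unfolding eq using \<open>b K = 1\<close> by simp
  qed
qed

lemma floor_double: "\<lfloor>2 * x\<rfloor> - 2 * \<lfloor>x\<rfloor> = 0 \<or> \<lfloor>2 * x\<rfloor> - 2 * \<lfloor>x\<rfloor> = (1::int)"
  for x :: real
proof -
  have a: "of_int \<lfloor>x\<rfloor> \<le> x" "x < of_int \<lfloor>x\<rfloor> + 1" by linarith+
  have "2 * \<lfloor>x\<rfloor> \<le> \<lfloor>2 * x\<rfloor>" using a by (simp add: le_floor_iff)
  moreover have "2 * x < of_int (2 * \<lfloor>x\<rfloor> + 2)" using a by linarith
  then have "\<lfloor>2 * x\<rfloor> < 2 * \<lfloor>x\<rfloor> + 2" by (simp only: floor_less_iff)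
  ultimately show ?thesis by linarith
qed

definition bdig :: "nat \<Rightarrow> real \<Rightarrow> real" where
  "bdig m t = of_int (\<lfloor>2^(m+1) * t\<rfloor> - 2 * \<lfloor>2^m * t\<rfloor>)"

lemma bdig_01: "bdig m t = 0 \<or> bdig m t = 1"
proof -
  have e: "(2::real)^(m+1) * t = 2 * (2^m * t)" by simp
  have "\<lfloor>2^(m+1) * t\<rfloor> - 2 * \<lfloor>2^m * t\<rfloor> = 0 \<or> \<lfloor>2^(m+1) * t\<rfloor> - 2 * \<lfloor>2^m * t\<rfloor> = (1::int)"
    unfolding e by (rule floor_double)
  then show ?thesis unfolding bdig_def by (elim disjE) simp_all
qed

lemma bdig_partial: "(\<Sum>m<M. bdig m t / 2^(m+1)) = of_int \<lfloor>2^M * t\<rfloor> / 2^M - of_int \<lfloor>t\<rfloor>"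
proof -
  have "(\<Sum>m<M. bdig m t / 2^(m+1)) =
        (\<Sum>m<M. of_int \<lfloor>2^(Suc m) * t\<rfloor> / 2^(Suc m) - of_int \<lfloor>2^m * t\<rfloor> / 2^m)"
    by (intro sum.cong refl) (simp add: bdig_def field_simps)
  also have "\<dots> = of_int \<lfloor>2^M * t\<rfloor> / 2^M - of_int \<lfloor>t\<rfloor>"
    by (subst sum_lessThan_telescope[where f = "\<lambda>m. of_int \<lfloor>2^m * t\<rfloor> / 2^m"]) simp
  finally show ?thesis .
qed

lemma bdig_sums:
  assumes "0 \<le> t" "t < 1"
  shows "(\<lambda>m. bdig m t / 2^(m+1)) sums t"
proof -
  have ft: "\<lfloor>t\<rfloor> = 0" using assms by (simp add: floor_eq_iff)
  have lo: "t - 1 / 2^M \<le> of_int \<lfloor>2^M * t\<rfloor> / 2^M" for M :: nat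
  proof -
    have "2^M * t - 1 \<le> of_int \<lfloor>2^M * t\<rfloor>" using floor_correct[of "2^M * t"] by simp
    then have "(2^M * t - 1) / 2^M \<le> of_int \<lfloor>2^M * t\<rfloor> / (2::real)^M" by (rule divide_right_mono) simp
    moreover have "(2^M * t - 1) / 2^M = t - 1 / (2::real)^M" by (simp add: diff_divide_distrib)
    ultimately show ?thesis by simp
  qed
  have hi: "of_int \<lfloor>2^M * t\<rfloor> / 2^M \<le> t" for M :: nat
  proof -
    have "of_int \<lfloor>2^M * t\<rfloor> \<le> 2^M * t" by (rule of_int_floor_le)
    then have "of_int \<lfloor>2^M * t\<rfloor> / 2^M \<le> 2^M * t / (2::real)^M" by (rule divide_right_mono) simp
    then show ?thesis by simp
  qed
  have z: "(\<lambda>M. 1 / (2::real)^M) \<longlonglongrightarrow> 0"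
    by (simp add: LIMSEQ_inverse_realpow_zero divide_inverse)
  have l1: "(\<lambda>M. t - 1 / (2::real)^M) \<longlonglongrightarrow> t - 0"
    by (intro tendsto_diff tendsto_const z)
  have "(\<lambda>M. of_int \<lfloor>2^M * t\<rfloor> / (2::real)^M) \<longlonglongrightarrow> t"
    by (rule real_tendsto_sandwich[OF always_eventually always_eventually _ tendsto_const])
       (use lo hi l1 in auto)
  then show ?thesis unfolding sums_def bdig_partial ft by simp
qed

definition enc :: "'n::finite \<Rightarrow> nat" where
  "enc = (SOME e. bij_betw e (UNIV::'n set) {0..<CARD('n)})"

lemma enc_bij: "bij_betw (enc :: 'n::finite \<Rightarrow> nat) UNIV {0..<CARD('n)}"
proof -
  have "\<exists>e. bij_betw e (UNIV::'n set) {0..<CARD('n)}" by (rule ex_bij_betw_finite_nat) simp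
  then show ?thesis unfolding enc_def by (rule someI_ex)
qed

lemma enc_less: "enc (i::'n::finite) < CARD('n)"
  using enc_bij bij_betwE by fastforce

lemma enc_inv: "inv_into UNIV enc (enc (i::'n::finite)) = i"
  by (meson bij_betw_def inv_into_f_f UNIV_I enc_bij)

definition cdig :: "nat \<Rightarrow> real^'n::finite \<Rightarrow> real" where
  "cdig k y = bdig (k div CARD('n)) (y $ inv_into UNIV enc (k mod CARD('n)))"

definition scode :: "real^'n::finite \<Rightarrow> real" where
  "scode y = (\<Sum>k. 2 * cdig k y / 3^(k+1))"

definition hdec :: "real \<Rightarrow> real^'n::finite" where
  "hdec x = (\<chi> i. \<Sum>m. gdig (3^(m * CARD('n) + enc i) * x) / 2^(m+1))"

lemma cdig_01: "cdig k y = 0 \<or> cdig k y = 1"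
  unfolding cdig_def by (rule bdig_01)

lemma cdig_pos: "cdig (m * CARD('n) + enc i) (y::real^'n::finite) = bdig m (y $ i)"
proof -
  have c: "0 < CARD('n)" by simp
  have "(m * CARD('n) + enc i) div CARD('n) = m" using enc_less[of i] c by simp
  moreover have "(m * CARD('n) + enc i) mod CARD('n) = enc i" using enc_less[of i] by simp
  ultimately show ?thesis unfolding cdig_def by (simp add: enc_inv)
qed

lemma summable_half: "summable (\<lambda>m. c / (2::real)^(m+1))"
proof -
  have "summable (\<lambda>m. (c/2) * (1/2::real)^m)" by (intro summable_mult summable_geometric) auto
  then show ?thesis by (simp add: power_divide)
qed

lemma hdec_scode:
  assumes "\<And>i. 0 \<le> y $ i" "\<And>i. y $ i < 1"
  shows "hdec (scode y) = (y::real^'n::finite)"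
proof -
  have "(\<Sum>m. gdig (3^(m * CARD('n) + enc i) * scode y) / 2^(m+1)) = y $ i" for i
  proof -
    have "gdig (3^(m * CARD('n) + enc i) * scode y) = bdig m (y $ i)" for m
      unfolding scode_def by (subst ternary_digit) (auto simp: cdig_01 cdig_pos)
    then show ?thesis using sums_unique[OF bdig_sums[OF assms]] by simp
  qed
  then show ?thesis unfolding hdec_def by (simp add: vec_eq_iff)
qed

lemma scode_bounds: "0 \<le> scode y" "scode y \<le> 1"
proof -
  have s: "summable (\<lambda>k. 2 * cdig k y / 3^(k+1))" by (rule summable_tern[OF cdig_01])
  show "0 \<le> scode y" unfolding scode_def
  proof (intro suminf_nonneg[OF s])
    fix n show "0 \<le> 2 * cdig n y / 3^(n+1)" using cdig_01[of n y] by auto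
  qed
  have g: "(\<lambda>k. (2/3) * (1/3::real)^k) sums ((2/3) * (1 / (1 - 1/3)))"
    by (intro sums_mult geometric_sums) auto
  have "scode y \<le> (\<Sum>k. (2/3) * (1/3::real)^k)" unfolding scode_def
  proof (rule suminf_le[OF _ s sums_summable[OF g]])
    fix k
    show "2 * cdig k y / 3^(k+1) \<le> (2/3) * (1/3::real)^k"
      using cdig_01[of k y] by (auto simp: power_divide)
  qed
  also have "\<dots> = 1" using sums_unique[OF g] by simp
  finally show "scode y \<le> 1" .
qed

lemma scode_measurable[measurable]: "scode \<in> borel_measurable borel"
  unfolding scode_def cdig_def bdig_def by measurable

lemma hdec_bounds: "0 \<le> hdec x $ (i::'n::finite)" "hdec x $ i \<le> 1"
proof -
  have s: "summable (\<lambda>m. gdig (3^(m * CARD('n) + enc i) * x) / 2^(m+1))"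
    by (rule summable_comparison_test'[OF summable_half[of 1]]) (simp add: gdig_bounds divide_right_mono)
  have e: "hdec x $ i = (\<Sum>m. gdig (3^(m * CARD('n) + enc i) * x) / 2^(m+1))"
    unfolding hdec_def by simp
  show "0 \<le> hdec x $ i" unfolding e
    by (intro suminf_nonneg[OF s]) (simp add: gdig_bounds)
  have "hdec x $ i \<le> (\<Sum>m. 1 / (2::real)^(m+1))" unfolding e
    by (intro suminf_le[OF _ s summable_half]) (simp add: gdig_bounds divide_right_mono)
  also have "\<dots> = 1"
  proof -
    have "(\<lambda>m. 1/(2::real)^(m+1)) = (\<lambda>n. (1/2)^Suc n)" by (simp add: power_divide)
    then show ?thesis using power_half_series sums_unique by metis
  qed
  finally show "hdec x $ i \<le> 1" .
qed

lemma continuous_hdec: "continuous_on UNIV (hdec :: real \<Rightarrow> real^'n::finite)"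
  unfolding hdec_def
proof (intro continuous_on_vec_lambda)
  fix i :: 'n
  let ?f = "\<lambda>m x. gdig (3^(m * CARD('n) + enc i) * x) / (2::real)^(m+1)"
  have u: "uniform_limit UNIV (\<lambda>n x. \<Sum>m<n. ?f m x) (\<lambda>x. \<Sum>m. ?f m x) sequentially"
    by (rule Weierstrass_m_test[OF _ summable_half[of 1]]) (auto simp: gdig_bounds divide_right_mono)
  have c: "continuous_on UNIV (?f m)" for m
    by (intro continuous_intros continuous_on_compose2[OF continuous_gdig]) auto
  show "continuous_on UNIV (\<lambda>x. \<Sum>m. ?f m x)"
    by (rule uniform_limit_theorem[OF _ u]) (intro always_eventually allI continuous_on_sum c, simp)
qed

section \<open>Growth bounds\<close>

lemma pow_le_one_plus:
  fixes t :: real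
  assumes "e \<le> D" "0 \<le> t"
  shows "t ^ e \<le> 1 + t ^ D"
proof (cases "t \<le> 1")
  case True
  then have "t ^ e \<le> 1" using assms by (intro power_le_one) auto
  moreover have "0 \<le> t ^ D" using assms by simp
  ultimately show ?thesis by linarith
next
  case False
  then have "t ^ e \<le> t ^ D" using assms by (intro power_increasing) auto
  then show ?thesis by simp
qed

lemma monom_bound:
  fixes x :: "real^'n::finite"
  shows "\<bar>\<Prod>i\<in>UNIV. (x $ i) ^ \<alpha> i\<bar> \<le> norm x ^ (\<Sum>i\<in>UNIV. \<alpha> i)"
proof -
  have "\<bar>\<Prod>i\<in>UNIV. (x $ i) ^ \<alpha> i\<bar> = (\<Prod>i\<in>UNIV. \<bar>x $ i\<bar> ^ \<alpha> i)"
    by (simp add: abs_prod power_abs)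
  also have "\<dots> \<le> (\<Prod>i\<in>UNIV. norm x ^ \<alpha> i)"
    by (intro prod_mono conjI power_mono component_le_norm_cart) auto
  also have "\<dots> = norm x ^ (\<Sum>i\<in>UNIV. \<alpha> i)"
    by (simp add: power_sum)
  finally show ?thesis .
qed

lemma pdeg_ge:
  assumes "poly_coeffs c" "c \<alpha> \<noteq> 0"
  shows "(\<Sum>i\<in>UNIV. \<alpha> i) \<le> pdeg c"
proof -
  have "{(\<Sum>i\<in>UNIV. \<alpha> i) | \<alpha>. c \<alpha> \<noteq> 0} = (\<lambda>\<alpha>. \<Sum>i\<in>UNIV. \<alpha> i) ` {\<alpha>. c \<alpha> \<noteq> 0}" by auto
  then have fin: "finite {(\<Sum>i\<in>UNIV. \<alpha> i) | \<alpha>. c \<alpha> \<noteq> 0}"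
    using assms(1) unfolding poly_coeffs_def by simp
  show ?thesis unfolding pdeg_def
    by (rule Max_ge) (use fin assms(2) in auto)
qed

lemma peval_growth:
  fixes c :: "('n::finite \<Rightarrow> nat) \<Rightarrow> real"
  assumes "poly_coeffs c" "pdeg c \<le> D"
  shows "\<bar>peval c x\<bar> \<le> (\<Sum>\<alpha>\<in>{\<alpha>. c \<alpha> \<noteq> 0}. \<bar>c \<alpha>\<bar>) * (1 + norm x ^ D)"
proof -
  have "\<bar>peval c x\<bar> \<le> (\<Sum>\<alpha>\<in>{\<alpha>. c \<alpha> \<noteq> 0}. \<bar>c \<alpha> * (\<Prod>i\<in>UNIV. (x $ i) ^ \<alpha> i)\<bar>)"
    unfolding peval_def by (rule sum_abs)
  also have "\<dots> \<le> (\<Sum>\<alpha>\<in>{\<alpha>. c \<alpha> \<noteq> 0}. \<bar>c \<alpha>\<bar> * (1 + norm x ^ D))"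
  proof (rule sum_mono)
    fix \<alpha> assume "\<alpha> \<in> {\<alpha>. c \<alpha> \<noteq> 0}"
    then have "(\<Sum>i\<in>UNIV. \<alpha> i) \<le> D" using pdeg_ge[OF assms(1)] assms(2) by fastforce
    then have "norm x ^ (\<Sum>i\<in>UNIV. \<alpha> i) \<le> 1 + norm x ^ D" by (intro pow_le_one_plus) auto
    then have "\<bar>\<Prod>i\<in>UNIV. (x $ i) ^ \<alpha> i\<bar> \<le> 1 + norm x ^ D" using monom_bound[of x \<alpha>] by linarith
    then show "\<bar>c \<alpha> * (\<Prod>i\<in>UNIV. (x $ i) ^ \<alpha> i)\<bar> \<le> \<bar>c \<alpha>\<bar> * (1 + norm x ^ D)"
      by (simp add: abs_mult mult_left_mono)
  qed
  also have "\<dots> = (\<Sum>\<alpha>\<in>{\<alpha>. c \<alpha> \<noteq> 0}. \<bar>c \<alpha>\<bar>) * (1 + norm x ^ D)"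
    by (simp add: sum_distrib_right)
  finally show ?thesis .
qed

lemma continuous_peval: "continuous_on UNIV (peval c)"
  unfolding peval_def by (intro continuous_intros)

lemma borel_peval[measurable]: "peval c \<in> borel_measurable borel"
  by (rule borel_measurable_continuous_onI[OF continuous_peval])

lemma borel_measurable_vec_lambda:
  fixes f :: "'a \<Rightarrow> 'n::finite \<Rightarrow> real"
  assumes "\<And>i. (\<lambda>x. f x i) \<in> borel_measurable M"
  shows "(\<lambda>x. \<chi> i. f x i) \<in> borel_measurable M"
proof (rule borel_measurable_euclidean_space[THEN iffD2], intro ballI)
  fix b :: "real^'n" assume "b \<in> Basis"
  then obtain j where b: "b = axis j 1" by (auto simp: Basis_vec_def)
  show "(\<lambda>x. (\<chi> i. f x i) \<bullet> b) \<in> borel_measurable M"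
    unfolding b inner_axis using assms by simp
qed

definition theta :: "real^'n::finite \<Rightarrow> real^'n" where
  "theta z = (\<chi> i. max 0 (z $ i) / (1 + max 0 (z $ i)))"

definition thinv :: "real^'n::finite \<Rightarrow> real^'n" where
  "thinv y = (\<chi> i. y $ i / (1 - y $ i))"

definition Scode :: "real^'n::finite \<Rightarrow> real" where
  "Scode z = scode (theta z)"

definition Phi :: "real \<Rightarrow> real^'n::finite" where
  "Phi x = thinv (hdec x)"

lemma theta_nth: "theta z $ i = max 0 (z $ i) / (1 + max 0 (z $ i))"
  unfolding theta_def by simp

lemma theta_bounds: "0 \<le> theta z $ i" "theta z $ i < 1"
  unfolding theta_nth by (auto simp: divide_less_eq)

lemma hdec_Scode: "hdec (Scode z) = theta z"
  unfolding Scode_def by (rule hdec_scode) (auto simp: theta_bounds)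

lemma Phi_Scode:
  assumes "z \<in> nonneg_orthant" shows "Phi (Scode z) = z"
proof -
  have "thinv (theta z) $ i = z $ i" for i
  proof -
    have z: "0 \<le> z $ i" using assms by (auto simp: nonneg_orthant_def)
    then show ?thesis unfolding thinv_def theta_nth by (simp add: field_simps)
  qed
  then show ?thesis unfolding Phi_def hdec_Scode by (simp add: vec_eq_iff)
qed

lemma Phi_in: "Phi x \<in> nonneg_orthant"
  unfolding nonneg_orthant_def Phi_def thinv_def
  using hdec_bounds[of x] by (auto intro!: divide_nonneg_nonneg)

lemma continuous_theta: "continuous_on UNIV theta"
  unfolding theta_def
  by (intro continuous_intros) (auto simp: add_nonneg_pos)

lemma theta_measurable[measurable]: "theta \<in> borel_measurable borel"
  using continuous_theta by (rule borel_measurable_continuous_onI)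

lemma closed_orthant: "closed (nonneg_orthant :: (real^'n::finite) set)"
  unfolding nonneg_orthant_def
  by (intro closed_Collect_all closed_Collect_le continuous_intros)

lemma orth_sets[measurable]: "nonneg_orthant \<in> sets borel"
  using closed_orthant by (rule borel_closed)

lemma Scode_measurable[measurable]: "Scode \<in> borel_measurable borel"
proof -
  have "theta \<in> borel_measurable borel"
    using continuous_theta by (rule borel_measurable_continuous_onI)
  then show ?thesis unfolding Scode_def[abs_def] by measurable
qed

lemma hdec_measurable[measurable]: "hdec \<in> borel_measurable borel"
  using continuous_hdec by (rule borel_measurable_continuous_onI)

lemma Phi_measurable[measurable]: "(Phi :: real \<Rightarrow> real^'n::finite) \<in> borel_measurable borel"
proof -
  have c: "(\<lambda>y::real^'n. y $ i) \<in> borel_measurable borel" for i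
    by (intro borel_measurable_continuous_onI continuous_intros)
  have "(thinv :: real^'n \<Rightarrow> real^'n) \<in> borel_measurable borel"
    unfolding thinv_def[abs_def]
    by (intro borel_measurable_vec_lambda borel_measurable_divide borel_measurable_diff c) auto
  then show ?thesis unfolding Phi_def[abs_def] by measurable
qed

lemma isCont_Phi:
  assumes "\<And>i::'n. (hdec x :: real^'n) $ i < 1"
  shows "isCont (Phi :: real \<Rightarrow> real^'n::finite) x"
proof -
  have h: "isCont (hdec :: real \<Rightarrow> real^'n) x"
    by (metis continuous_hdec continuous_on_eq_continuous_at open_UNIV UNIV_I)
  have "isCont (\<lambda>x. (hdec x :: real^'n) $ i / (1 - (hdec x :: real^'n) $ i)) x" for i
    using assms[of i] by (intro continuous_intros h) auto
  then show ?thesis unfolding Phi_def[abs_def] thinv_def isCont_def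
    by (intro tendsto_vec_lambda) auto
qed

lemma closed_bad: "closed {x. \<exists>i::'n::finite. 1 \<le> hdec x $ i}"
proof -
  have "{x. \<exists>i::'n. 1 \<le> (hdec x :: real^'n) $ i} = (\<Union>i::'n. {x. 1 \<le> (hdec x :: real^'n) $ i})" by auto
  moreover have "closed {x. 1 \<le> (hdec x :: real^'n) $ i}" for i
    by (intro closed_Collect_le continuous_intros continuous_on_compose2[OF continuous_hdec]) auto
  ultimately show ?thesis by (auto intro: closed_UN)
qed

lemma space_borel_sets: "sets M = sets borel \<Longrightarrow> space M = UNIV"
  using sets_eq_imp_space_eq by fastforce

lemma AE_orth:
  assumes "sets \<mu> = sets (borel :: (real^'n::finite) measure)" "emeasure \<mu> (UNIV - nonneg_orthant) = 0"
  shows "AE z in \<mu>. z \<in> nonneg_orthant"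
proof (rule AE_I'[of "UNIV - nonneg_orthant"])
  show "UNIV - nonneg_orthant \<in> null_sets \<mu>"
    using assms by (auto simp: null_sets_def)
qed auto

lemma integral_le_of_nn:
  fixes f :: "'a \<Rightarrow> real"
  assumes "f \<in> borel_measurable \<mu>" "\<And>x. 0 \<le> f x" "(\<integral>\<^sup>+x. ennreal (f x) \<partial>\<mu>) \<le> ennreal c" "0 \<le> c"
  shows "(\<integral>x. f x \<partial>\<mu>) \<le> c"
proof -
  have "(\<integral>x. f x \<partial>\<mu>) = enn2real (\<integral>\<^sup>+x. ennreal (f x) \<partial>\<mu>)"
    using assms by (intro integral_eq_nn_integral) auto
  also have "\<dots> \<le> enn2real (ennreal c)"
    using assms by (intro enn2real_mono) auto
  also have "\<dots> = c" using assms by simp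
  finally show ?thesis .
qed

lemma integrable_moment:
  fixes \<mu> :: "(real^'n::finite) measure"
  assumes sets: "sets \<mu> = sets borel" and fin: "finite_measure \<mu>"
    and mom: "(\<integral>\<^sup>+x. ennreal (norm x ^ d) \<partial>\<mu>) \<le> ennreal Mb"
  shows "integrable \<mu> (\<lambda>x. norm x ^ d)"
proof (rule integrableI_nonneg)
  show "(\<lambda>x. norm x ^ d) \<in> borel_measurable \<mu>"
    using sets by (simp add: measurable_cong_sets[OF sets refl])
  show "(\<integral>\<^sup>+x. ennreal (norm x ^ d) \<partial>\<mu>) < \<infinity>"
    using mom by (simp add: le_less_trans)
qed auto

lemma integrable_growth:
  fixes \<mu> :: "(real^'n::finite) measure" and G :: "real^'n \<Rightarrow> real"
  assumes sets: "sets \<mu> = sets borel" and fin: "finite_measure \<mu>"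
    and orth: "emeasure \<mu> (UNIV - nonneg_orthant) = 0"
    and mom: "(\<integral>\<^sup>+x. ennreal (norm x ^ d) \<partial>\<mu>) \<le> ennreal Mb"
    and Dd: "D \<le> d" and A: "0 \<le> A"
    and Gm: "G \<in> borel_measurable borel"
    and Gb: "\<forall>z\<in>nonneg_orthant. \<bar>G z\<bar> \<le> A * (1 + norm z ^ D)"
  shows "integrable \<mu> G"
proof -
  interpret finite_measure \<mu> by (rule fin)
  have i1: "integrable \<mu> (\<lambda>x. A * (2 + norm x ^ d))"
    using integrable_moment[OF sets fin mom] by (intro integrable_mult_right integrable_add) auto
  show ?thesis
  proof (rule Bochner_Integration.integrable_bound[OF i1])
    show "G \<in> borel_measurable \<mu>" using Gm by (simp add: measurable_cong_sets[OF sets refl])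
    show "AE x in \<mu>. norm (G x) \<le> norm (A * (2 + norm x ^ d))"
      using AE_orth[OF sets orth]
    proof eventually_elim
      case (elim z)
      have "norm z ^ D \<le> 1 + norm z ^ d" using Dd by (intro pow_le_one_plus) auto
      then have "A * (1 + norm z ^ D) \<le> A * (2 + norm z ^ d)" using A by (intro mult_left_mono) auto
      then show ?case using Gb elim A by auto
    qed
  qed
qed

lemma meas_borel:
  assumes "sets M = sets borel" "f \<in> borel_measurable borel"
  shows "f \<in> borel_measurable M"
  using assms measurable_cong_sets[OF assms(1) refl] by simp

definition chi :: "real \<Rightarrow> real^'n::finite \<Rightarrow> real" where
  "chi R z = max 0 (min 1 (R + 1 - norm z))"

lemma chi_bounds: "0 \<le> chi R z" "chi R z \<le> 1"
  unfolding chi_def by auto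

lemma continuous_chi: "continuous_on UNIV (chi R)"
  unfolding chi_def by (intro continuous_intros)

lemma chi_measurable[measurable]: "chi R \<in> borel_measurable borel"
  using continuous_chi by (rule borel_measurable_continuous_onI)

lemma tail_pointwise:
  fixes G :: "real^'n::finite \<Rightarrow> real"
  assumes "D < d" "0 \<le> A" "1 \<le> R" "\<bar>G z\<bar> \<le> A * (1 + norm z ^ D)"
  shows "\<bar>G z - G z * chi R z\<bar> \<le> 2 * A / R * norm z ^ d"
proof -
  have e: "\<bar>G z - G z * chi R z\<bar> = \<bar>G z\<bar> * (1 - chi R z)"
  proof -
    have "G z - G z * chi R z = G z * (1 - chi R z)" by (simp add: algebra_simps)
    then show ?thesis using chi_bounds[of R z] by (simp add: abs_mult)
  qed
  show ?thesis
  proof (cases "norm z \<le> R")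
    case True
    then have "chi R z = 1" unfolding chi_def by auto
    then show ?thesis unfolding e using assms by auto
  next
    case False
    then have n1: "1 \<le> norm z" "R < norm z" using assms by auto
    have "\<bar>G z\<bar> * (1 - chi R z) \<le> \<bar>G z\<bar>" using chi_bounds[of R z] by (simp add: mult_left_le)
    also have "\<dots> \<le> A * (1 + norm z ^ D)" by (rule assms(4))
    also have "\<dots> \<le> A * (2 * norm z ^ D)"
    proof -
      have "1 \<le> norm z ^ D" using n1 by (simp add: one_le_power)
      then show ?thesis using assms(2) by (intro mult_left_mono) auto
    qed
    also have "\<dots> \<le> 2 * A / R * norm z ^ d"
    proof -
      have "R * norm z ^ D \<le> norm z * norm z ^ D"
        using n1 by (intro mult_right_mono) auto
      also have "\<dots> = norm z ^ (D + 1)" by simp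
      also have "\<dots> \<le> norm z ^ d" using n1 assms(1) by (intro power_increasing) auto
      finally have "R * norm z ^ D \<le> norm z ^ d" .
      then have "(2 * A) * (R * norm z ^ D) \<le> (2 * A) * norm z ^ d"
        using assms(2) by (intro mult_left_mono) auto
      then have "A * (2 * norm z ^ D) * R \<le> 2 * A * norm z ^ d" by (simp add: algebra_simps)
      then have "A * (2 * norm z ^ D) \<le> 2 * A * norm z ^ d / R"
        using assms(3) by (simp add: pos_le_divide_eq)
      then show ?thesis by simp
    qed
    finally show ?thesis unfolding e .
  qed
qed

lemma tail_bound:
  fixes Q :: "(real^'n::finite) measure" and G :: "real^'n \<Rightarrow> real"
  assumes sets: "sets Q = sets borel" and fin: "finite_measure Q"
    and orth: "emeasure Q (UNIV - nonneg_orthant) = 0"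
    and mom: "(\<integral>\<^sup>+x. ennreal (norm x ^ d) \<partial>Q) \<le> ennreal Mb" and Mb: "0 \<le> Mb"
    and Dd: "D < d" and A: "0 \<le> A" and R: "1 \<le> R"
    and Gm[measurable]: "G \<in> borel_measurable borel"
    and Gb: "\<forall>z\<in>nonneg_orthant. \<bar>G z\<bar> \<le> A * (1 + norm z ^ D)"
  shows "\<bar>(\<integral>z. G z \<partial>Q) - (\<integral>z. G z * chi R z \<partial>Q)\<bar> \<le> 2 * A * Mb / R"
proof -
  interpret finite_measure Q by (rule fin)
  have iG: "integrable Q G"
    by (rule integrable_growth[OF sets fin orth mom _ A Gm Gb]) (use Dd in simp)
  have ig: "integrable Q (\<lambda>z. G z * chi R z)"
  proof (rule Bochner_Integration.integrable_bound[OF iG])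
    show "(\<lambda>z. G z * chi R z) \<in> borel_measurable Q" by (rule meas_borel[OF sets]) simp
    show "AE x in Q. norm (G x * chi R x) \<le> norm (G x)"
    proof (rule AE_I2)
      fix x :: "real^'n"
      have "0 \<le> chi R x" "chi R x \<le> 1" by (rule chi_bounds)+
      then show "norm (G x * chi R x) \<le> norm (G x)" by (simp add: abs_mult mult_left_le)
    qed
  qed
  have inorm: "integrable Q (\<lambda>z. norm z ^ d)" by (rule integrable_moment[OF sets fin mom])
  have "\<bar>(\<integral>z. G z \<partial>Q) - (\<integral>z. G z * chi R z \<partial>Q)\<bar> = \<bar>\<integral>z. G z - G z * chi R z \<partial>Q\<bar>"
    by (subst Bochner_Integration.integral_diff[OF iG ig]) simp
  also have "\<dots> \<le> (\<integral>z. \<bar>G z - G z * chi R z\<bar> \<partial>Q)" by (rule integral_abs_bound)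
  also have "\<dots> \<le> (\<integral>z. 2 * A / R * norm z ^ d \<partial>Q)"
  proof (rule integral_mono_AE')
    show "integrable Q (\<lambda>z. 2 * A / R * norm z ^ d)" using inorm by simp
    show "AE z in Q. \<bar>G z - G z * chi R z\<bar> \<le> 2 * A / R * norm z ^ d"
      using AE_orth[OF sets orth]
      by eventually_elim (rule tail_pointwise[OF Dd A R], use Gb in auto)
    show "AE z in Q. 0 \<le> 2 * A / R * norm z ^ d" using A R by auto
  qed
  also have "\<dots> = 2 * A / R * (\<integral>z. norm z ^ d \<partial>Q)" by simp
  also have "\<dots> \<le> 2 * A / R * Mb"
  proof (rule mult_left_mono)
    show "(\<integral>z. norm z ^ d \<partial>Q) \<le> Mb"
      by (rule integral_le_of_nn[OF _ _ mom Mb]) (auto intro: meas_borel[OF sets])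
  qed (use A R in auto)
  also have "\<dots> = 2 * A * Mb / R" by simp
  finally show ?thesis .
qed

context
  fixes \<mu>s :: "nat \<Rightarrow> (real^'n::finite) measure" and d D :: nat and Mb :: real
  assumes dD: "D < d" and Mb: "0 \<le> Mb"
    and sets_\<mu>s: "\<And>j. sets (\<mu>s j) = sets borel"
    and prob_\<mu>s: "\<And>j. prob_space (\<mu>s j)"
    and orth_\<mu>s: "\<And>j. emeasure (\<mu>s j) (UNIV - nonneg_orthant) = 0"
    and mom_\<mu>s: "\<And>j. (\<integral>\<^sup>+x. ennreal (norm x ^ d) \<partial>\<mu>s j) \<le> ennreal Mb"
begin

lemma compact_limit:
  "\<exists>r \<mu>. strict_mono r \<and> sets \<mu> = sets borel \<and> prob_space \<mu>
     \<and> emeasure \<mu> (UNIV - nonneg_orthant) = 0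
     \<and> (\<integral>\<^sup>+x. ennreal (norm x ^ d) \<partial>\<mu>) \<le> ennreal Mb
     \<and> (\<forall>G A. G \<in> borel_measurable borel \<longrightarrow> continuous_on nonneg_orthant G \<longrightarrow> 0 \<le> A \<longrightarrow>
          (\<forall>z\<in>nonneg_orthant. \<bar>G z\<bar> \<le> A * (1 + norm z ^ D)) \<longrightarrow>
          (\<lambda>j. \<integral>x. G x \<partial>\<mu>s (r j)) \<longlonglongrightarrow> (\<integral>x. G x \<partial>\<mu>))"
proof -
  have sp: "space (\<mu>s j) = UNIV" for j using sets_\<mu>s by (rule space_borel_sets)
  have Sm: "Scode \<in> measurable (\<mu>s j) borel" for j
    by (rule meas_borel[OF sets_\<mu>s]) simp
  define \<nu> where "\<nu> j = distr (\<mu>s j) borel Scode" for j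
  have rd: "real_distribution (\<nu> j)" for j
  proof -
    interpret prob_space "\<mu>s j" by (rule prob_\<mu>s)
    show ?thesis unfolding \<nu>_def real_distribution_def real_distribution_axioms_def
      using prob_space_distr[OF Sm] by simp
  qed
  have meas1: "measure (\<nu> j) {-1<..2} = 1" for j
  proof -
    interpret prob_space "\<mu>s j" by (rule prob_\<mu>s)
    have b: "-1 < Scode z" "Scode z \<le> 2" for z :: "real^'n"
      unfolding Scode_def using scode_bounds[of "theta z"] by linarith+
    have "Scode -` {-1<..2} \<inter> space (\<mu>s j) = space (\<mu>s j)"
      using b by (auto simp: sp)
    then show ?thesis unfolding \<nu>_def by (subst measure_distr[OF Sm]) (auto simp: prob_space)
  qed
  have tight: "tight \<nu>"
    unfolding tight_def
  proof (intro conjI allI impI)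
    show "real_distribution (\<nu> n)" for n by (rule rd)
    fix \<epsilon> :: real assume "0 < \<epsilon>"
    show "\<exists>a b. a < b \<and> (\<forall>n. measure (\<nu> n) {a<..b} > 1 - \<epsilon>)"
      by (rule exI[of _ "-1"], rule exI[of _ 2]) (simp add: \<open>0 < \<epsilon>\<close> meas1)
  qed
  obtain r \<nu>0 where r: "strict_mono r" and rd0: "real_distribution \<nu>0"
      and wc: "weak_conv_m (\<nu> \<circ> id \<circ> r) \<nu>0"
    using tight_imp_convergent_subsubsequence[OF tight strict_mono_id] by blast
  interpret \<nu>0: real_distribution \<nu>0 by (rule rd0)
  have wc': "weak_conv_m (\<lambda>j. \<nu> (r j)) \<nu>0" using wc by (simp add: comp_def)
  have rd': "real_distribution (\<nu> (r j))" for j by (rule rd)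
  have WC: "(\<lambda>j. \<integral>x. F x \<partial>\<nu> (r j)) \<longlonglongrightarrow> (\<integral>x. F x \<partial>\<nu>0)"
    if "F \<in> borel_measurable borel" "\<And>x. norm (F x) \<le> B" "emeasure \<nu>0 {x. \<not> isCont F x} = 0"
    for F :: "real \<Rightarrow> real" and B
    using weak_conv_imp_bdd_ae_continuous_conv[OF rd' rd0 wc' that(3) that(2) that(1)] .
  have transfer: "(\<integral>x. g (Phi x) \<partial>\<nu> j) = (\<integral>z. g z \<partial>\<mu>s j)"
    if [measurable]: "g \<in> borel_measurable borel" for g :: "real^'n \<Rightarrow> real" and j
  proof -
    have "(\<integral>x. g (Phi x) \<partial>\<nu> j) = (\<integral>z. g (Phi (Scode z)) \<partial>\<mu>s j)"
      unfolding \<nu>_def by (rule integral_distr[OF Sm]) measurable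
    also have "\<dots> = (\<integral>z. g z \<partial>\<mu>s j)"
    proof (rule integral_cong_AE)
      show "(\<lambda>z. g (Phi (Scode z))) \<in> borel_measurable (\<mu>s j)"
        by (rule meas_borel[OF sets_\<mu>s]) simp
      show "g \<in> borel_measurable (\<mu>s j)"
        by (rule meas_borel[OF sets_\<mu>s]) simp
      show "AE z in \<mu>s j. g (Phi (Scode z)) = g z"
        using AE_orth[OF sets_\<mu>s orth_\<mu>s] by eventually_elim (simp add: Phi_Scode)
    qed
    finally show ?thesis .
  qed
  define bad where "bad = {x. \<exists>i::'n. 1 \<le> (hdec x :: real^'n) $ i}"
  have bad_sets[measurable]: "bad \<in> sets borel"
    unfolding bad_def by (rule borel_closed[OF closed_bad])
  have bad_null: "emeasure \<nu>0 bad = 0"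
  proof -
    have bound: "measure \<nu>0 bad * L \<le> Mb" if L: "1 \<le> L" for L :: real
    proof -
      define a where "a = L / (1 + L)"
      have a01: "0 < a" "a < 1" using L by (auto simp: a_def field_simps)
      define \<rho> where "\<rho> y = L * min 1 (\<Sum>i\<in>UNIV. max 0 ((y $ i - a) / (1 - a)))" for y :: "real^'n"
      define F where "F x = \<rho> (hdec x)" for x
      have \<rho>_cont: "continuous_on UNIV \<rho>" unfolding \<rho>_def[abs_def]
        by (intro continuous_intros) (use a01 in auto)
      have F_cont: "continuous_on UNIV F" unfolding F_def[abs_def]
        by (rule continuous_on_compose2[OF \<rho>_cont continuous_hdec]) auto
      have Fm[measurable]: "F \<in> borel_measurable borel" using F_cont by (rule borel_measurable_continuous_onI)
      have \<rho>m[measurable]: "\<rho> \<in> borel_measurable borel" using \<rho>_cont by (rule borel_measurable_continuous_onI)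
      have \<rho>_nonneg: "0 \<le> \<rho> y" for y unfolding \<rho>_def using L
        by (intro mult_nonneg_nonneg) (auto intro!: sum_nonneg)
      have \<rho>_le: "\<rho> y \<le> L" for y unfolding \<rho>_def using L by (auto intro!: mult_left_le)
      have Fb: "norm (F x) \<le> L" for x unfolding F_def using \<rho>_nonneg \<rho>_le by simp
      have key: "\<rho> (theta z) \<le> norm z ^ d" if z: "z \<in> nonneg_orthant" for z
      proof (cases "\<forall>i. theta z $ i \<le> a")
        case True
        have "max 0 ((theta z $ i - a) / (1 - a)) = 0" for i :: 'n
        proof -
          have "(theta z $ i - a) / (1 - a) \<le> 0" using True a01 by (intro divide_nonpos_pos) auto
          then show ?thesis by simp
        qed
        then have "\<rho> (theta z) = 0" unfolding \<rho>_def by simp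
        then show ?thesis by simp
      next
        case False
        then obtain i :: 'n where i: "a < theta z $ i" using not_le by blast
        have zi: "0 \<le> z $ i" using z by (auto simp: nonneg_orthant_def)
        have "L < z $ i"
        proof (rule ccontr)
          assume "\<not> L < z $ i"
          then have le: "z $ i \<le> L" by simp
          have "theta z $ i = 1 - 1 / (1 + z $ i)" using zi unfolding theta_nth by (simp add: field_simps)
          also have "\<dots> \<le> 1 - 1 / (1 + L)"
          proof -
            have "1 / (1 + L) \<le> 1 / (1 + z $ i)" using le zi by (intro divide_left_mono) auto
            then show ?thesis by simp
          qed
          also have "\<dots> = a" unfolding a_def using L by (simp add: field_simps)
          finally show False using i by simp
        qed
        then have n: "L < norm z" using component_le_norm_cart[of z i] by simp
        have "norm z ^ 1 \<le> norm z ^ d" using n L dD by (intro power_increasing) auto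
        then show ?thesis using \<rho>_le[of "theta z"] n by simp
      qed
      have int_le: "(\<integral>x. F x \<partial>\<nu> j) \<le> Mb" for j
      proof -
        have "(\<integral>x. F x \<partial>\<nu> j) = (\<integral>z. F (Scode z) \<partial>\<mu>s j)"
          unfolding \<nu>_def by (rule integral_distr[OF Sm]) simp
        also have "\<dots> = (\<integral>z. \<rho> (theta z) \<partial>\<mu>s j)" unfolding F_def hdec_Scode ..
        also have "\<dots> \<le> Mb"
        proof (rule integral_le_of_nn[OF _ _ _ Mb])
          show "(\<lambda>z. \<rho> (theta z)) \<in> borel_measurable (\<mu>s j)" by (rule meas_borel[OF sets_\<mu>s]) simp
          show "0 \<le> \<rho> (theta z)" for z by (rule \<rho>_nonneg)
          have "AE z in \<mu>s j. ennreal (\<rho> (theta z)) \<le> ennreal (norm z ^ d)"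
            using AE_orth[OF sets_\<mu>s orth_\<mu>s, of j] by eventually_elim (rule ennreal_leI, rule key)
          then have "(\<integral>\<^sup>+z. ennreal (\<rho> (theta z)) \<partial>\<mu>s j) \<le> (\<integral>\<^sup>+z. ennreal (norm z ^ d) \<partial>\<mu>s j)"
            by (rule nn_integral_mono_AE)
          then show "(\<integral>\<^sup>+z. ennreal (\<rho> (theta z)) \<partial>\<mu>s j) \<le> ennreal Mb"
            using mom_\<mu>s[of j] by (rule order_trans)
        qed
        finally show ?thesis .
      qed
      have "{x. \<not> isCont F x} = {}"
        using F_cont by (auto simp: continuous_on_eq_continuous_at)
      then have lim: "(\<lambda>j. \<integral>x. F x \<partial>\<nu> (r j)) \<longlonglongrightarrow> (\<integral>x. F x \<partial>\<nu>0)"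
        by (intro WC[OF Fm Fb]) simp
      have limle: "(\<integral>x. F x \<partial>\<nu>0) \<le> Mb"
        by (rule LIMSEQ_le_const2[OF lim]) (use int_le in auto)
      have bad0: "bad \<in> sets \<nu>0" by simp
      have "measure \<nu>0 bad * L = (\<integral>x. indicator bad x * L \<partial>\<nu>0)"
        using bad0 by simp
      also have "\<dots> \<le> (\<integral>x. F x \<partial>\<nu>0)"
      proof (rule integral_mono)
        show "integrable \<nu>0 (\<lambda>x. indicator bad x * L)"
          using bad0 by (intro integrable_mult_left integrable_real_indicator) (auto simp: \<nu>0.emeasure_eq_measure)
        show "integrable \<nu>0 F"
          by (rule \<nu>0.integrable_const_bound[where B = L]) (use Fb in \<open>auto intro: AE_I2\<close>)
        fix x assume "x \<in> space \<nu>0"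
        show "indicator bad x * L \<le> F x"
        proof (cases "x \<in> bad")
          case True
          then obtain i where hi: "1 \<le> (hdec x :: real^'n) $ i" unfolding bad_def by auto
          have t1: "1 \<le> max 0 ((hdec x $ i - a) / (1 - a))"
          proof -
            have "(1 - a) / (1 - a) \<le> (hdec x $ i - a) / (1 - a)"
              using hi a01 by (intro divide_right_mono) auto
            then show ?thesis using a01 by simp
          qed
          have "max 0 (((hdec x :: real^'n) $ i - a) / (1 - a)) \<le> (\<Sum>i\<in>UNIV. max 0 (((hdec x :: real^'n) $ i - a) / (1 - a)))"
            by (rule member_le_sum) auto
          then have "\<rho> (hdec x) = L" unfolding \<rho>_def using t1 by simp
          then show ?thesis using True unfolding F_def by simp
        next
          case False
          then show ?thesis using \<rho>_nonneg unfolding F_def by simp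
        qed
      qed
      also have "\<dots> \<le> Mb" by (rule limle)
      finally show ?thesis .
    qed
    have "measure \<nu>0 bad = 0"
    proof (rule ccontr)
      assume "measure \<nu>0 bad \<noteq> 0"
      then have m: "0 < measure \<nu>0 bad" using measure_nonneg[of \<nu>0 bad] by linarith
      define L where "L = (Mb + 1) / measure \<nu>0 bad + 1"
      have L1: "1 \<le> L" unfolding L_def using m Mb by simp
      have "measure \<nu>0 bad * L = Mb + 1 + measure \<nu>0 bad"
        unfolding L_def using m by (simp add: field_simps)
      then show False using bound[OF L1] m by linarith
    qed
    then show ?thesis by (simp add: \<nu>0.emeasure_eq_measure)
  qed
  define \<mu> where "\<mu> = distr \<nu>0 borel (Phi :: real \<Rightarrow> real^'n)"
  have sets_\<mu>: "sets \<mu> = sets borel" unfolding \<mu>_def by simp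
  have prob_\<mu>: "prob_space \<mu>" unfolding \<mu>_def
    by (rule \<nu>0.prob_space_distr) (rule meas_borel[OF \<nu>0.events_eq_borel], simp)
  have orth_\<mu>: "emeasure \<mu> (UNIV - nonneg_orthant) = 0"
  proof -
    have "(Phi :: real \<Rightarrow> real^'n) -` (UNIV - nonneg_orthant) \<inter> space \<nu>0 = {}" using Phi_in by auto
    then show ?thesis unfolding \<mu>_def
      by (subst emeasure_distr) (auto intro: meas_borel[OF \<nu>0.events_eq_borel])
  qed
  have W: "(\<lambda>j. \<integral>z. g z \<partial>\<mu>s (r j)) \<longlonglongrightarrow> (\<integral>z. g z \<partial>\<mu>)"
    if gm[measurable]: "g \<in> borel_measurable borel" and gc: "continuous_on nonneg_orthant g"
      and gb: "\<forall>z\<in>nonneg_orthant. \<bar>g z\<bar> \<le> B" for g :: "real^'n \<Rightarrow> real" and B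
  proof -
    define F where "F x = g (Phi x)" for x
    have Fm[measurable]: "F \<in> borel_measurable borel" unfolding F_def[abs_def] by measurable
    have Fb: "norm (F x) \<le> B" for x unfolding F_def using gb Phi_in by auto
    have sub: "{x. \<not> isCont F x} \<subseteq> bad"
    proof
      fix x assume x: "x \<in> {x. \<not> isCont F x}"
      show "x \<in> bad"
      proof (rule ccontr)
        assume "x \<notin> bad"
        then have "\<And>i::'n. (hdec x :: real^'n) $ i < 1" unfolding bad_def by (auto simp: not_le)
        then have c: "isCont (Phi :: real \<Rightarrow> real^'n) x" by (rule isCont_Phi)
        have pin: "(Phi x :: real^'n) \<in> nonneg_orthant" by (rule Phi_in)
        have "continuous (at (Phi x) within nonneg_orthant) g"
          using gc pin by (simp add: continuous_on_eq_continuous_within)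
        then have "continuous (at (Phi x) within range (Phi :: real \<Rightarrow> real^'n)) g"
          by (rule continuous_within_subset) (use Phi_in in auto)
        then have "isCont F x" unfolding F_def[abs_def]
          using continuous_within_compose2[of x UNIV Phi g] c by simp
        then show False using x by simp
      qed
    qed
    have null: "emeasure \<nu>0 {x. \<not> isCont F x} = 0"
    proof -
      have "emeasure \<nu>0 {x. \<not> isCont F x} \<le> emeasure \<nu>0 bad"
        by (rule emeasure_mono[OF sub]) simp
      then show ?thesis using bad_null by simp
    qed
    have lim: "(\<lambda>j. \<integral>x. F x \<partial>\<nu> (r j)) \<longlonglongrightarrow> (\<integral>x. F x \<partial>\<nu>0)"
      by (rule WC[OF Fm Fb null])
    have e1: "(\<integral>x. F x \<partial>\<nu> (r j)) = (\<integral>z. g z \<partial>\<mu>s (r j))" for j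
      unfolding F_def by (rule transfer) simp
    have e2: "(\<integral>z. g z \<partial>\<mu>) = (\<integral>x. F x \<partial>\<nu>0)"
      unfolding \<mu>_def F_def
      by (rule integral_distr) (auto intro: meas_borel[OF \<nu>0.events_eq_borel])
    show ?thesis using lim unfolding e1 e2 .
  qed
  have fin_\<mu>: "finite_measure \<mu>" using prob_\<mu> by (simp add: prob_space_def)
  have mom_\<mu>: "(\<integral>\<^sup>+x. ennreal (norm x ^ d) \<partial>\<mu>) \<le> ennreal Mb"
  proof -
    interpret finite_measure \<mu> by (rule fin_\<mu>)
    define gL where "gL L z = min (real L) (norm z ^ d)" for L :: nat and z :: "real^'n"
    have gLm[measurable]: "gL L \<in> borel_measurable borel" for L unfolding gL_def[abs_def] by measurable
    have gL_nn: "0 \<le> gL L z" for L z unfolding gL_def by simp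
    have each: "(\<integral>\<^sup>+z. ennreal (gL L z) \<partial>\<mu>) \<le> ennreal Mb" for L
    proof -
      have lim: "(\<lambda>j. \<integral>z. gL L z \<partial>\<mu>s (r j)) \<longlonglongrightarrow> (\<integral>z. gL L z \<partial>\<mu>)"
      proof (rule W[of "gL L" "real L"])
        show "continuous_on nonneg_orthant (gL L)" unfolding gL_def[abs_def] by (intro continuous_intros)
        show "\<forall>z\<in>nonneg_orthant. \<bar>gL L z\<bar> \<le> real L" unfolding gL_def by auto
      qed simp
      have "(\<integral>z. gL L z \<partial>\<mu>s j) \<le> Mb" for j
      proof (rule integral_le_of_nn[OF _ gL_nn _ Mb])
        show "gL L \<in> borel_measurable (\<mu>s j)" by (rule meas_borel[OF sets_\<mu>s]) simp
        have "(\<integral>\<^sup>+z. ennreal (gL L z) \<partial>\<mu>s j) \<le> (\<integral>\<^sup>+z. ennreal (norm z ^ d) \<partial>\<mu>s j)"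
          by (intro nn_integral_mono ennreal_leI) (simp add: gL_def)
        then show "(\<integral>\<^sup>+z. ennreal (gL L z) \<partial>\<mu>s j) \<le> ennreal Mb"
          using mom_\<mu>s[of j] by (rule order_trans)
      qed
      then have le: "(\<integral>z. gL L z \<partial>\<mu>) \<le> Mb"
        by (intro LIMSEQ_le_const2[OF lim]) auto
      have "(\<integral>\<^sup>+z. ennreal (gL L z) \<partial>\<mu>) = ennreal (\<integral>z. gL L z \<partial>\<mu>)"
      proof (rule nn_integral_eq_integral)
        show "integrable \<mu> (gL L)"
          by (rule integrable_const_bound[where B = "real L"])
             (auto simp: gL_def intro!: AE_I2 meas_borel[OF sets_\<mu>])
      qed (simp add: gL_nn)
      then show ?thesis using le by (simp add: ennreal_leI)
    qed
    have sup: "ennreal (norm z ^ d) = (SUP L. ennreal (gL L z))" for z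
    proof (rule antisym)
      obtain L :: nat where L: "norm z ^ d \<le> real L" using real_arch_simple by blast
      then have "gL L z = norm z ^ d" unfolding gL_def by simp
      then show "ennreal (norm z ^ d) \<le> (SUP L. ennreal (gL L z))"
        by (metis UNIV_I SUP_upper order_refl)
      show "(SUP L. ennreal (gL L z)) \<le> ennreal (norm z ^ d)"
        by (rule SUP_least) (auto simp: gL_def intro!: ennreal_leI)
    qed
    have inc: "incseq (\<lambda>L z. ennreal (gL L z))"
      unfolding incseq_def le_fun_def gL_def by (auto intro!: ennreal_leI)
    have "(\<integral>\<^sup>+z. ennreal (norm z ^ d) \<partial>\<mu>) = (\<integral>\<^sup>+z. (SUP L. ennreal (gL L z)) \<partial>\<mu>)"
      by (rule nn_integral_cong) (simp add: sup)
    also have "\<dots> = (SUP L. (\<integral>\<^sup>+z. ennreal (gL L z) \<partial>\<mu>))"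
      by (rule nn_integral_monotone_convergence_SUP[OF inc]) (auto intro: meas_borel[OF sets_\<mu>])
    also have "\<dots> \<le> ennreal Mb" by (rule SUP_least) (rule each)
    finally show ?thesis .
  qed
  have conv: "(\<lambda>j. \<integral>x. G x \<partial>\<mu>s (r j)) \<longlonglongrightarrow> (\<integral>x. G x \<partial>\<mu>)"
    if "G \<in> borel_measurable borel" "continuous_on nonneg_orthant G" "0 \<le> A"
      "\<forall>z\<in>nonneg_orthant. \<bar>G z\<bar> \<le> A * (1 + norm z ^ D)" for G A
  proof (rule LIMSEQ_I)
    note Gm[measurable] = that(1)
    fix \<epsilon> :: real assume e: "0 < \<epsilon>"
    define R where "R = 6 * A * Mb / \<epsilon> + 1"
    have R1: "1 \<le> R" unfolding R_def using e that(3) Mb by simp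
    have T: "2 * A * Mb / R < \<epsilon> / 3"
    proof -
      have "\<epsilon> * R = 6 * A * Mb + \<epsilon>" unfolding R_def using e by (simp add: field_simps)
      then have "2 * A * Mb * 3 < \<epsilon> * R" using e by simp
      then show ?thesis using R1 by (simp add: field_simps)
    qed
    define g where "g z = G z * chi R z" for z
    have gm[measurable]: "g \<in> borel_measurable borel" unfolding g_def[abs_def] by measurable
    have gc: "continuous_on nonneg_orthant g" unfolding g_def[abs_def]
      by (intro continuous_on_mult that(2) continuous_on_subset[OF continuous_chi]) auto
    have gb: "\<forall>z\<in>nonneg_orthant. \<bar>g z\<bar> \<le> A * (1 + (R + 1) ^ D)"
    proof
      fix z :: "real^'n" assume z: "z \<in> nonneg_orthant"
      show "\<bar>g z\<bar> \<le> A * (1 + (R + 1) ^ D)"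
      proof (cases "R + 1 \<le> norm z")
        case True
        then have "chi R z = 0" unfolding chi_def by simp
        then show ?thesis unfolding g_def using that(3) R1 by simp
      next
        case False
        have "\<bar>g z\<bar> \<le> \<bar>G z\<bar>" unfolding g_def using chi_bounds[of R z]
          by (simp add: abs_mult mult_left_le)
        also have "\<dots> \<le> A * (1 + norm z ^ D)" using that(4) z by auto
        also have "\<dots> \<le> A * (1 + (R + 1) ^ D)"
          using False that(3) by (intro mult_left_mono add_left_mono power_mono) auto
        finally show ?thesis .
      qed
    qed
    have lg: "(\<lambda>j. \<integral>z. g z \<partial>\<mu>s (r j)) \<longlonglongrightarrow> (\<integral>z. g z \<partial>\<mu>)"
      by (rule W[OF gm gc gb])
    obtain N where N: "\<And>n. n \<ge> N \<Longrightarrow> norm ((\<integral>z. g z \<partial>\<mu>s (r n)) - (\<integral>z. g z \<partial>\<mu>)) < \<epsilon> / 3"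
      using LIMSEQ_D[OF lg, of "\<epsilon> / 3"] e by auto
    have t\<mu>: "\<bar>(\<integral>z. G z \<partial>\<mu>) - (\<integral>z. g z \<partial>\<mu>)\<bar> \<le> 2 * A * Mb / R"
      unfolding g_def by (rule tail_bound[OF sets_\<mu> fin_\<mu> orth_\<mu> mom_\<mu> Mb dD that(3) R1 Gm that(4)])
    have t\<mu>s: "\<bar>(\<integral>z. G z \<partial>\<mu>s j) - (\<integral>z. g z \<partial>\<mu>s j)\<bar> \<le> 2 * A * Mb / R" for j
    proof -
      have "finite_measure (\<mu>s j)" using prob_\<mu>s[of j] by (simp add: prob_space_def)
      then show ?thesis
        unfolding g_def by (rule tail_bound[OF sets_\<mu>s _ orth_\<mu>s mom_\<mu>s Mb dD that(3) R1 Gm that(4)])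
    qed
    show "\<exists>no. \<forall>n\<ge>no. norm ((\<integral>x. G x \<partial>\<mu>s (r n)) - (\<integral>x. G x \<partial>\<mu>)) < \<epsilon>"
    proof (intro exI allI impI)
      fix n assume "N \<le> n"
      then have a: "\<bar>(\<integral>z. g z \<partial>\<mu>s (r n)) - (\<integral>z. g z \<partial>\<mu>)\<bar> < \<epsilon> / 3" using N by simp
      have b: "\<bar>(\<integral>z. G z \<partial>\<mu>s (r n)) - (\<integral>z. g z \<partial>\<mu>s (r n))\<bar> \<le> 2 * A * Mb / R" by (rule t\<mu>s)
      show "norm ((\<integral>x. G x \<partial>\<mu>s (r n)) - (\<integral>x. G x \<partial>\<mu>)) < \<epsilon>"
        using a b t\<mu> T unfolding real_norm_def abs_le_iff abs_less_iff by linarith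
    qed
  qed
  show ?thesis
    using r sets_\<mu> prob_\<mu> orth_\<mu> mom_\<mu> conv by blast
qed

end

lemma hinge_growth:
  fixes z :: "real^'n::finite"
  assumes "1 \<le> D"
  shows "\<bar>max 0 (z $ i - c)\<bar> \<le> (\<bar>c\<bar> + 1) * (1 + norm z ^ D)"
proof -
  have "\<bar>max 0 (z $ i - c)\<bar> \<le> \<bar>z $ i\<bar> + \<bar>c\<bar>" by auto
  also have "\<dots> \<le> norm z + \<bar>c\<bar>" using component_le_norm_cart[of z i] by simp
  also have "norm z \<le> 1 + norm z ^ D" using pow_le_one_plus[of 1 D "norm z"] assms by simp
  then have "norm z + \<bar>c\<bar> \<le> (\<bar>c\<bar> + 1) * (1 + norm z ^ D)"
  proof -
    have "0 \<le> \<bar>c\<bar> * norm z ^ D" by simp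
    moreover have "(\<bar>c\<bar> + 1) * (1 + norm z ^ D) = \<bar>c\<bar> + \<bar>c\<bar> * norm z ^ D + 1 + norm z ^ D"
      by (simp add: algebra_simps)
    ultimately show ?thesis using \<open>norm z \<le> 1 + norm z ^ D\<close> by linarith
  qed
  finally show ?thesis .
qed

lemma feasible_props:
  assumes "\<mu> \<in> feasible_measures N k q m f p M d"
  shows "sets \<mu> = sets borel" "prob_space \<mu>" "emeasure \<mu> (UNIV - nonneg_orthant) = 0"
    "(\<integral>\<^sup>+x. ennreal (norm x ^ d) \<partial>\<mu>) \<le> ennreal M"
    "\<And>i j. j \<in> {1..N i} \<Longrightarrow> (\<integral>x. max 0 (x $ i - k i j) \<partial>\<mu>) = q i j"
    "\<And>l. l \<in> {1..m} \<Longrightarrow> (\<integral>x. peval (f l) x \<partial>\<mu>) = p l"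
proof -
  show s: "sets \<mu> = sets borel" using assms by (simp add: feasible_measures_def)
  have sp: "space \<mu> = UNIV" using s by (rule space_borel_sets)
  have fm: "finite_measure \<mu>" using assms by (simp add: feasible_measures_def)
  have m1: "measure \<mu> UNIV = 1" using assms by (simp add: feasible_measures_def)
  show "prob_space \<mu>"
  proof
    show "emeasure \<mu> (space \<mu>) = 1"
      using m1 sp finite_measure.emeasure_eq_measure[OF fm] by simp
  qed
qed (use assms in \<open>auto simp: feasible_measures_def\<close>)

theorem lemma1:
  fixes N :: "'n::finite \<Rightarrow> nat" and k q :: "'n \<Rightarrow> nat \<Rightarrow> real"
    and m :: nat and f :: "nat \<Rightarrow> (('n \<Rightarrow> nat) \<Rightarrow> real)" and p :: "nat \<Rightarrow> real"
    and M :: real and phi :: "real^'n \<Rightarrow> real"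
    and P :: "nat \<Rightarrow> (('n \<Rightarrow> nat) \<Rightarrow> real)" and r :: nat and D d :: nat
  assumes M: "0 \<le> M"
    and f_poly: "\<forall>l\<in>{1..m}. poly_coeffs (f l)"
    and phi_pw: "cont_piecewise_poly_on nonneg_orthant phi P r"
    and phi_nonneg: "\<forall>x\<in>nonneg_orthant. 0 \<le> phi x"
    and D_def: "D = Max ({pw_deg P r} \<union> {1 | i j. i \<in> (UNIV::'n set) \<and> j \<in> {1..N i}}
                         \<union> {pdeg (f l) | l. l \<in> {1..m}})"
    and d_def: "d = (LEAST e::nat. even e \<and> D + 1 \<le> e)"
    and feas: "feasible_measures N k q m f p M d \<noteq> {}"
  shows "(\<exists>\<mu>\<in>feasible_measures N k q m f p M d.
            \<forall>\<nu>\<in>feasible_measures N k q m f p M d. (\<integral>x. phi x \<partial>\<nu>) \<le> (\<integral>x. phi x \<partial>\<mu>))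
       \<and> (\<exists>\<mu>\<in>feasible_measures N k q m f p M d.
            \<forall>\<nu>\<in>feasible_measures N k q m f p M d. (\<integral>x. phi x \<partial>\<mu>) \<le> (\<integral>x. phi x \<partial>\<nu>))"
proof -
  define F where "F = feasible_measures N k q m f p M d"
  define S1 :: "nat set" where "S1 = {1 | i j. i \<in> (UNIV::'n set) \<and> j \<in> {1..N i}}"
  define S2 where "S2 = {pdeg (f l) | l. l \<in> {1..m}}"
  have fS1: "finite S1" unfolding S1_def by (rule finite_subset[of _ "{1}"]) auto
  have fS2: "finite S2"
  proof -
    have "S2 = (\<lambda>l. pdeg (f l)) ` {1..m}" unfolding S2_def by auto
    then show ?thesis by simp
  qed
  have finD: "finite ({pw_deg P r} \<union> S1 \<union> S2)" using fS1 fS2 by simp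
  have Deq: "D = Max ({pw_deg P r} \<union> S1 \<union> S2)" unfolding D_def S1_def S2_def ..
  have pw_le: "pw_deg P r \<le> D" unfolding Deq by (rule Max_ge[OF finD]) simp
  have f_le: "pdeg (f l) \<le> D" if "l \<in> {1..m}" for l
    unfolding Deq by (rule Max_ge[OF finD]) (use that in \<open>auto simp: S2_def\<close>)
  have one_le: "1 \<le> D" if "j \<in> {1..N i}" for i j
    unfolding Deq by (rule Max_ge[OF finD]) (use that in \<open>auto simp: S1_def\<close>)
  have P_le: "pdeg (P j) \<le> D" if "j < r" for j
  proof -
    have fin: "finite (insert 0 {pdeg (P k) | k. k < r})"
    proof -
      have "{pdeg (P k) | k. k < r} = (\<lambda>k. pdeg (P k)) ` {..<r}" by auto
      then show ?thesis by simp
    qed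
    have "pdeg (P j) \<le> pw_deg P r" unfolding pw_deg_def
      by (rule Max_ge[OF fin]) (use that in auto)
    then show ?thesis using pw_le by simp
  qed
  have dD: "D < d"
  proof -
    have "\<exists>e::nat. even e \<and> D + 1 \<le> e" by (rule exI[of _ "2 * (D + 1)"]) simp
    then have "even d \<and> D + 1 \<le> d" unfolding d_def by (rule LeastI_ex)
    then show ?thesis by simp
  qed
  have phi_cont: "continuous_on nonneg_orthant phi"
    using phi_pw by (simp add: cont_piecewise_poly_on_def)
  show ?thesis
  proof (cases "phi \<in> borel_measurable borel")
    case False
    have zero: "(\<integral>x. phi x \<partial>\<nu>) = 0" if "\<nu> \<in> F" for \<nu>
    proof -
      have "sets \<nu> = sets borel" using feasible_props(1) that unfolding F_def by blast
      then have "\<not> integrable \<nu> phi" using False measurable_cong_sets[of \<nu> borel] by auto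
      then show ?thesis by (rule not_integrable_integral_eq)
    qed
    obtain \<mu>0 where "\<mu>0 \<in> F" using feas unfolding F_def by blast
    then show ?thesis unfolding F_def[symmetric] using zero by (metis order_refl)
  next
    case True
    note phim[measurable] = True
    define Aphi where "Aphi = (\<Sum>j<r. \<Sum>\<alpha>\<in>{\<alpha>. P j \<alpha> \<noteq> 0}. \<bar>P j \<alpha>\<bar>)"
    have Aphi: "0 \<le> Aphi" unfolding Aphi_def by (intro sum_nonneg) auto
    have phi_growth: "\<forall>z\<in>nonneg_orthant. \<bar>phi z\<bar> \<le> Aphi * (1 + norm z ^ D)"
    proof
      fix z :: "real^'n" assume z: "z \<in> nonneg_orthant"
      obtain j where j: "j < r" "phi z = peval (P j) z"
        using phi_pw z unfolding cont_piecewise_poly_on_def by blast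
      have pc: "poly_coeffs (P j)" using phi_pw j unfolding cont_piecewise_poly_on_def by blast
      have "\<bar>phi z\<bar> \<le> (\<Sum>\<alpha>\<in>{\<alpha>. P j \<alpha> \<noteq> 0}. \<bar>P j \<alpha>\<bar>) * (1 + norm z ^ D)"
        unfolding j(2) by (rule peval_growth[OF pc P_le[OF j(1)]])
      also have "\<dots> \<le> Aphi * (1 + norm z ^ D)"
      proof (rule mult_right_mono)
        show "(\<Sum>\<alpha>\<in>{\<alpha>. P j \<alpha> \<noteq> 0}. \<bar>P j \<alpha>\<bar>) \<le> Aphi"
          unfolding Aphi_def by (rule member_le_sum[where f = "\<lambda>j. \<Sum>\<alpha>\<in>{\<alpha>. P j \<alpha> \<noteq> 0}. \<bar>P j \<alpha>\<bar>"])
            (use j in \<open>auto intro: sum_nonneg\<close>)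
      qed simp
      finally show "\<bar>phi z\<bar> \<le> Aphi * (1 + norm z ^ D)" .
    qed
    define V where "V = (\<lambda>\<mu>. \<integral>x. phi x \<partial>\<mu>) ` F"
    have "seq_compact V"
    proof (rule seq_compactI)
      fix g :: "nat \<Rightarrow> real" assume g: "\<forall>n. g n \<in> V"
      then have "\<forall>n. \<exists>\<mu>\<in>F. g n = (\<integral>x. phi x \<partial>\<mu>)" unfolding V_def by auto
      then obtain \<mu>s where \<mu>s: "\<And>n. \<mu>s n \<in> F" "\<And>n. g n = (\<integral>x. phi x \<partial>\<mu>s n)" by metis
      have \<mu>sF: "\<mu>s n \<in> feasible_measures N k q m f p M d" for n using \<mu>s(1) unfolding F_def .
      obtain rr \<mu> where rr: "strict_mono rr" and sets_\<mu>: "sets \<mu> = sets borel" and prob_\<mu>: "prob_space \<mu>"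
        and orth_\<mu>: "emeasure \<mu> (UNIV - nonneg_orthant) = 0"
        and mom_\<mu>: "(\<integral>\<^sup>+x. ennreal (norm x ^ d) \<partial>\<mu>) \<le> ennreal M"
        and conv: "\<And>G A. G \<in> borel_measurable borel \<Longrightarrow> continuous_on nonneg_orthant G \<Longrightarrow> 0 \<le> A \<Longrightarrow>
          (\<forall>z\<in>nonneg_orthant. \<bar>G z\<bar> \<le> A * (1 + norm z ^ D)) \<Longrightarrow>
          (\<lambda>j. \<integral>x. G x \<partial>\<mu>s (rr j)) \<longlonglongrightarrow> (\<integral>x. G x \<partial>\<mu>)"
        using compact_limit[of D d M \<mu>s, OF dD M feasible_props(1)[OF \<mu>sF] feasible_props(2)[OF \<mu>sF]
            feasible_props(3)[OF \<mu>sF] feasible_props(4)[OF \<mu>sF]] by blast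
      have fin_\<mu>: "finite_measure \<mu>" using prob_\<mu> by (simp add: prob_space_def)
      have sp: "space \<mu> = UNIV" using sets_\<mu> by (rule space_borel_sets)
      have \<mu>F: "\<mu> \<in> F"
        unfolding F_def feasible_measures_def
      proof (intro CollectI conjI allI ballI)
        show "sets \<mu> = sets borel" "finite_measure \<mu>" "emeasure \<mu> (UNIV - nonneg_orthant) = 0"
          "(\<integral>\<^sup>+x. ennreal (norm x ^ d) \<partial>\<mu>) \<le> ennreal M" by fact+
        show "measure \<mu> UNIV = 1" using prob_space.prob_space[OF prob_\<mu>] sp by simp
      next
        fix i j assume j: "j \<in> {1..N i}"
        have Gb: "\<forall>z\<in>nonneg_orthant. \<bar>max 0 (z $ i - k i j)\<bar> \<le> (\<bar>k i j\<bar> + 1) * (1 + norm z ^ D)"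
          using hinge_growth[OF one_le[OF j]] by blast
        show "integrable \<mu> (\<lambda>x. max 0 (x $ i - k i j))"
          by (rule integrable_growth[OF sets_\<mu> fin_\<mu> orth_\<mu> mom_\<mu> _ _ _ Gb]) (use dD in auto)
        have "(\<lambda>n. \<integral>x. max 0 (x $ i - k i j) \<partial>\<mu>s (rr n)) \<longlonglongrightarrow> (\<integral>x. max 0 (x $ i - k i j) \<partial>\<mu>)"
          by (rule conv[OF _ _ _ Gb]) (auto intro!: continuous_intros)
        moreover have "(\<lambda>n. \<integral>x. max 0 (x $ i - k i j) \<partial>\<mu>s (rr n)) = (\<lambda>n. q i j)"
          using feasible_props(5)[OF \<mu>sF j] by simp
        ultimately show "(\<integral>x. max 0 (x $ i - k i j) \<partial>\<mu>) = q i j"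
          using LIMSEQ_unique tendsto_const by metis
      next
        fix l assume l: "l \<in> {1..m}"
        define A where "A = (\<Sum>\<alpha>\<in>{\<alpha>. f l \<alpha> \<noteq> 0}. \<bar>f l \<alpha>\<bar>)"
        have A: "0 \<le> A" unfolding A_def by (intro sum_nonneg) auto
        have Gb: "\<forall>z\<in>nonneg_orthant. \<bar>peval (f l) z\<bar> \<le> A * (1 + norm z ^ D)"
          unfolding A_def using peval_growth[OF _ f_le[OF l]] f_poly l by blast
        show "integrable \<mu> (peval (f l))"
          by (rule integrable_growth[OF sets_\<mu> fin_\<mu> orth_\<mu> mom_\<mu> _ A _ Gb]) (use dD in auto)
        have "(\<lambda>n. \<integral>x. peval (f l) x \<partial>\<mu>s (rr n)) \<longlonglongrightarrow> (\<integral>x. peval (f l) x \<partial>\<mu>)"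
          by (rule conv[OF _ _ A Gb]) (auto intro: continuous_on_subset[OF continuous_peval])
        moreover have "(\<lambda>n. \<integral>x. peval (f l) x \<partial>\<mu>s (rr n)) = (\<lambda>n. p l)"
          using feasible_props(6)[OF \<mu>sF l] by simp
        ultimately show "(\<integral>x. peval (f l) x \<partial>\<mu>) = p l"
          using LIMSEQ_unique tendsto_const by metis
      qed
      have "(g \<circ> rr) \<longlonglongrightarrow> (\<integral>x. phi x \<partial>\<mu>)"
        unfolding comp_def \<mu>s(2) by (rule conv[OF phim phi_cont Aphi phi_growth])
      then show "\<exists>l\<in>V. \<exists>r::nat\<Rightarrow>nat. strict_mono r \<and> (g \<circ> r) \<longlonglongrightarrow> l"
        using rr \<mu>F unfolding V_def by blast
    qed
    then have cV: "compact V" by (simp add: seq_compact_eq_compact)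
    have nV: "V \<noteq> {}" using feas unfolding V_def F_def by simp
    obtain s where s: "s \<in> V" "\<forall>t\<in>V. t \<le> s" using compact_attains_sup[OF cV nV] by blast
    obtain s' where s': "s' \<in> V" "\<forall>t\<in>V. s' \<le> t" using compact_attains_inf[OF cV nV] by blast
    show ?thesis unfolding F_def[symmetric]
      using s s' unfolding V_def by blast
  qed
qed

end
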